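(* Let $G=(g_1,\dots,g_k)\in\mathbb{N}_0^k$ be telescopic with $g_1>0$ and $c(G)=(c_2,\dots,c_k)$, and let $1\le n\le m\le k$. Suppose $g_n$ is an $\mathbb{N}_0$-linear combination of the entries $g_i$ with $1\le i\le m$, $i\ne n$. Then either $g_n$ is an $\mathbb{N}_0$-linear combination of the entries $g_i$ with $1\le i\le m-1$, $i\ne n$, or $g_n=c_mg_m$.
   Context: $G_i=(g_1,\dots,g_i)$, $d_i=\gcd(G_i)$, $c_j=d_{j-1}/d_j$; $G$ is telescopic if $c_jg_j$ is an $\mathbb{N}_0$-linear combination of $g_1,\dots,g_{j-1}$ for all $2\le j\le k$. An empty $\mathbb{N}_0$-linear combination equals $0$. *)

theory Defs
  imports Main
begin

text \<open>A sequence G = (g_1,...,g_k) of nonnegative integers is modelled as a function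
  g :: nat => nat together with its length k; only the values g 1, ..., g k matter.\<close>

definition dG :: "(nat \<Rightarrow> nat) \<Rightarrow> nat \<Rightarrow> nat" where
  "dG g i = Gcd (g ` {1..i})"

definition cG :: "(nat \<Rightarrow> nat) \<Rightarrow> nat \<Rightarrow> nat" where
  "cG g j = dG g (j - 1) div dG g j"

definition lincomb :: "(nat \<Rightarrow> nat) \<Rightarrow> nat set \<Rightarrow> nat \<Rightarrow> bool" where
  "lincomb g S x \<longleftrightarrow> (\<exists>a :: nat \<Rightarrow> nat. x = (\<Sum>i\<in>S. a i * g i))"

definition telescopic :: "(nat \<Rightarrow> nat) \<Rightarrow> nat \<Rightarrow> bool" where
  "telescopic g k \<longleftrightarrow> (\<forall>j\<in>{2..k}. lincomb g {1..j-1} (cG g j * g j))"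

end

theory Submission
  imports Defs
begin

lemma dG_step: "m \<ge> 1 \<Longrightarrow> dG g m = gcd (dG g (m-1)) (g m)"
proof -
  assume "m \<ge> 1"
  then have "{1..m} = insert m {1..m-1}" by auto
  then show ?thesis unfolding dG_def by (simp add: gcd.commute)
qed

lemma dG_dvd: "i \<in> {1..j} \<Longrightarrow> dG g j dvd g i"
  unfolding dG_def by (simp add: Gcd_dvd)

lemma dG_pos: "g 1 > 0 \<Longrightarrow> j \<ge> 1 \<Longrightarrow> dG g j > 0"
proof -
  assume "g 1 > 0" "j \<ge> 1"
  then have "dG g j dvd g 1" by (intro dG_dvd) auto
  with \<open>g 1 > 0\<close> show ?thesis by (metis dvd_0_left_iff gr0I)
qed

lemma c_dvd:
  assumes "g 1 > 0" "m \<ge> 2" "dG g (m-1) dvd a * g m"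
  shows "cG g m dvd a"
proof -
  define D where "D = dG g (m-1)"
  define e where "e = dG g m"
  have e: "e = gcd D (g m)" unfolding e_def D_def using assms(2) by (simp add: dG_step)
  have epos: "e > 0" unfolding e_def using assms by (intro dG_pos) auto
  define c where "c = D div e"
  have cdef: "cG g m = c" unfolding c_def cG_def D_def e_def by simp
  obtain h where h: "g m = h * e" using e by (metis dvd_def gcd_dvd2 mult.commute)
  have De: "D = c * e" unfolding c_def using e by simp
  have "e * gcd c h = gcd (c*e) (h*e)" by (simp add: gcd_mult_distrib_nat mult.commute)
  also have "\<dots> = e" using e De h by simp
  finally have cop: "coprime c h" using epos by (simp add: coprime_iff_gcd_eq_1)
  have "c * e dvd (a * h) * e" using assms(3) De h unfolding D_def by (simp add: mult.assoc)
  then have "c dvd a * h" using epos by simp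
  then have "c dvd a" using cop by (metis coprime_dvd_mult_left_iff)
  then show ?thesis using cdef by simp
qed

theorem mainTheorem19:
  fixes g :: "nat \<Rightarrow> nat" and k n m :: nat
  assumes "telescopic g k" and "g 1 > 0"
    and "1 \<le> n" and "n \<le> m" and "m \<le> k"
    and "lincomb g ({1..m} - {n}) (g n)"
  shows "lincomb g ({1..m-1} - {n}) (g n) \<or> g n = cG g m * g m"
proof (cases "n = m")
  case True
  then have "{1..m} - {n} = {1..m-1} - {n}" by auto
  then show ?thesis using assms(6) by simp
next
  case False
  then have nm: "n < m" using assms by simp
  then have m2: "m \<ge> 2" using assms by simp
  define S where "S = {1..m-1} - {n}"
  define c where "c = cG g m"
  have finS: "finite S" unfolding S_def by simp
  have mS: "m \<notin> S" unfolding S_def by auto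
  have nS: "n \<notin> S" unfolding S_def by auto
  have Sins: "{1..m} - {n} = insert m S" unfolding S_def using nm m2 by auto
  have n1: "n \<in> {1..m-1}" using assms nm by auto
  have rem: "{1..m-1} = insert n S" unfolding S_def using n1 by auto
  obtain bb where bb: "c * g m = (\<Sum>i\<in>{1..m-1}. bb i * g i)"
  proof -
    have "m \<in> {2..k}" using m2 assms(5) by simp
    then have "lincomb g {1..m-1} (cG g m * g m)" using assms(1) unfolding telescopic_def by blast
    then show ?thesis using that unfolding lincomb_def c_def by blast
  qed
  have bb2: "c * g m = bb n * g n + (\<Sum>i\<in>S. bb i * g i)"
    using bb rem finS nS by simp
  have key: "\<forall>b. g n = a * g m + (\<Sum>i\<in>S. b i * g i) \<longrightarrow> g n \<noteq> c * g m \<longrightarrow> lincomb g S (g n)" for a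
  proof (induction a rule: less_induct)
    case (less a)
    show ?case
    proof (intro allI impI)
      fix b
      assume eq: "g n = a * g m + (\<Sum>i\<in>S. b i * g i)" and neq: "g n \<noteq> c * g m"
      show "lincomb g S (g n)"
      proof (cases "a = 0 \<or> g n = 0")
        case True
        then show ?thesis
        proof
          assume "a = 0" then show ?thesis using eq unfolding lincomb_def by auto
        next
          assume "g n = 0" then show ?thesis unfolding lincomb_def
            by (rule_tac x="\<lambda>_. 0" in exI) simp
        qed
      next
        case False
        then have a0: "a > 0" and gn0: "g n > 0" by auto
        define D where "D = dG g (m-1)"
        have Dn: "D dvd g n" unfolding D_def using n1 by (rule dG_dvd)
        have Ds: "D dvd (\<Sum>i\<in>S. b i * g i)"
          unfolding D_def by (rule dvd_sum) (auto simp: S_def intro!: dvd_mult dG_dvd)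
        have "a * g m = g n - (\<Sum>i\<in>S. b i * g i)" using eq by simp
        then have "D dvd a * g m" using Dn Ds by (simp add: dvd_diff_nat)
        then have "c dvd a" unfolding c_def D_def using c_dvd assms(2) m2 by blast
        moreover have "c > 0"
        proof -
          have "dG g m dvd dG g (m-1)" using dG_step[of m g] m2 by simp
          moreover have "dG g (m-1) > 0" using dG_pos assms(2) m2 by auto
          moreover have "dG g m > 0" using dG_pos assms(2) m2 by auto
          ultimately show ?thesis unfolding c_def cG_def
            by (metis div_greater_zero_iff dvd_imp_le)
        qed
        ultimately have ac: "c \<le> a" using a0 by (simp add: dvd_imp_le)
        have am: "a * g m = (a - c) * g m + c * g m" using ac by (simp add: diff_mult_distrib)
        have eq2: "g n = (a - c) * g m + bb n * g n + (\<Sum>i\<in>S. (b i + bb i) * g i)"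
          using eq am bb2 by (simp add: distrib_right sum.distrib)
        show ?thesis
        proof (cases "bb n = 0")
          case True
          then have "g n = (a - c) * g m + (\<Sum>i\<in>S. (b i + bb i) * g i)" using eq2 by simp
          moreover have "a - c < a" using \<open>c > 0\<close> a0 by simp
          ultimately show ?thesis using less.IH[of "a - c", THEN spec[where x="\<lambda>i. b i + bb i"]] neq by simp
        next
          case False
          then have "bb n * g n \<ge> g n" by simp
          then have "(a - c) * g m + (\<Sum>i\<in>S. (b i + bb i) * g i) = 0"
            using eq2 by linarith
          then have z1: "(a - c) * g m = 0" and z2: "(\<Sum>i\<in>S. (b i + bb i) * g i) = 0"
            by simp_all
          have "(\<Sum>i\<in>S. b i * g i) \<le> (\<Sum>i\<in>S. (b i + bb i) * g i)"
            by (rule sum_mono) (simp add: distrib_right)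
          then have "(\<Sum>i\<in>S. b i * g i) = 0" using z2 by simp
          then have "g n = c * g m" using eq am z1 by simp
          then show ?thesis using neq by simp
        qed
      qed
    qed
  qed
  obtain a where a: "g n = (\<Sum>i\<in>{1..m} - {n}. a i * g i)" using assms(6) unfolding lincomb_def by auto
  then have "g n = a m * g m + (\<Sum>i\<in>S. a i * g i)" using Sins finS mS by simp
  then show ?thesis using key[of "a m"] unfolding S_def c_def by blast
qed

end
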